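(* In the process described in the context, for each item $j$, $\Pr[\text{a medium or tiny blocking event occurs for } j\mid j\in\mathcal R_0]\le O(\alpha^2k^{-1}\log^2(k/\alpha))=o(1)$.
   Context: Consider a $k$-CS-PIP instance: matrix $\vec A\in[0,1]^{m\times n}$ (entries $a_{ij}$), each column having at most $k$ nonzero entries, and $\vec x\in[0,1]^n$ with $\vec A\vec x\le\vec 1$ (an optimal solution of the LP that additionally imposes $\sum_{j:a_{ij}>1/2}x_j\le1$ for every row $i$). Let $\alpha=k^{0.4}$, $\ell=80\log(k/\alpha)$, and for row $i$: $\mathrm{med}(i)=\{j:1/\ell\le a_{ij}\le 1/2\}$, $\mathrm{tiny}(i)=\{j:0<a_{ij}<1/\ell\}$. Let $\mathcal R_0$ contain each item $j$ independently with probability $\alpha x_j/k$. A medium blocking event occurs for $j$ if some row $i$ with $j\in\mathrm{med}(i)$ has $|\mathrm{med}(i)\cap\mathcal R_0|\ge 3$; a tiny blocking event occurs for $j$ if some row $i$ with $j\in\mathrm{tiny}(i)$ has $\sum_{j'\ne j,\ j'\in(\mathrm{med}(i)\cup\mathrm{tiny}(i))\cap\mathcal R_0}a_{ij'}>1-a_{ij}$ or $|\mathrm{med}(i)\cap\mathcal R_0|\ge2$. Asymptotics are as $k\to\infty$. *)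

theory Defs
  imports "HOL-Probability.Probability"
begin

definition kcspip_instance ::
  "nat \<Rightarrow> nat \<Rightarrow> nat \<Rightarrow> (nat \<Rightarrow> nat \<Rightarrow> real) \<Rightarrow> (nat \<Rightarrow> real) \<Rightarrow> bool" where
  "kcspip_instance k m n A x \<longleftrightarrow>
     (\<forall>i<m. \<forall>j<n. 0 \<le> A i j \<and> A i j \<le> 1) \<and>
     (\<forall>j<n. card {i. i < m \<and> A i j \<noteq> 0} \<le> k) \<and>
     (\<forall>j<n. 0 \<le> x j \<and> x j \<le> 1) \<and>
     (\<forall>i<m. (\<Sum>j<n. A i j * x j) \<le> 1) \<and>
     (\<forall>i<m. (\<Sum>j\<in>{j. j < n \<and> A i j > 1/2}. x j) \<le> 1)"

definition alpha :: "nat \<Rightarrow> real" where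
  "alpha k = real k powr 0.4"

definition ell :: "nat \<Rightarrow> real" where
  "ell k = 80 * ln (real k / alpha k)"

definition med :: "nat \<Rightarrow> (nat \<Rightarrow> nat \<Rightarrow> real) \<Rightarrow> nat \<Rightarrow> nat \<Rightarrow> nat set" where
  "med k A n i = {j. j < n \<and> 1 / ell k \<le> A i j \<and> A i j \<le> 1/2}"

definition tiny :: "nat \<Rightarrow> (nat \<Rightarrow> nat \<Rightarrow> real) \<Rightarrow> nat \<Rightarrow> nat \<Rightarrow> nat set" where
  "tiny k A n i = {j. j < n \<and> 0 < A i j \<and> A i j < 1 / ell k}"

definition R0_pmf :: "nat \<Rightarrow> nat \<Rightarrow> (nat \<Rightarrow> real) \<Rightarrow> nat set pmf" where
  "R0_pmf k n x = map_pmf (\<lambda>f. {j. f j})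
     (Pi_pmf {..<n} False (\<lambda>j. bernoulli_pmf (alpha k * x j / real k)))"

definition medium_block ::
  "nat \<Rightarrow> nat \<Rightarrow> nat \<Rightarrow> (nat \<Rightarrow> nat \<Rightarrow> real) \<Rightarrow> nat set \<Rightarrow> nat \<Rightarrow> bool" where
  "medium_block k m n A R j \<longleftrightarrow>
     (\<exists>i<m. j \<in> med k A n i \<and> card (med k A n i \<inter> R) \<ge> 3)"

definition tiny_block ::
  "nat \<Rightarrow> nat \<Rightarrow> nat \<Rightarrow> (nat \<Rightarrow> nat \<Rightarrow> real) \<Rightarrow> nat set \<Rightarrow> nat \<Rightarrow> bool" where
  "tiny_block k m n A R j \<longleftrightarrow>
     (\<exists>i<m. j \<in> tiny k A n i \<and>
        ((\<Sum>j'\<in>((med k A n i \<union> tiny k A n i) \<inter> R) - {j}. A i j') > 1 - A i j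
         \<or> card (med k A n i \<inter> R) \<ge> 2))"

text \<open>Conditional probability Pr[E | F] = Pr[E and F] / Pr[F] (0 if Pr[F] = 0).\<close>
definition cond_prob :: "'a pmf \<Rightarrow> ('a \<Rightarrow> bool) \<Rightarrow> ('a \<Rightarrow> bool) \<Rightarrow> real" where
  "cond_prob p E F = measure_pmf.prob p {s. E s \<and> F s} / measure_pmf.prob p {s. F s}"

end

theory Submission
  imports Defs "HOL-Real_Asymp.Real_Asymp"
begin

lemma fin_Pi: "finite (set_pmf (Pi_pmf {..<(n::nat)} False (\<lambda>j. bernoulli_pmf (p j))))"
proof (rule finite_subset[OF set_Pi_pmf_subset])
  have "{f::nat\<Rightarrow>bool. \<forall>x. x \<notin> {..<n} \<longrightarrow> f x = False} = PiE_dflt {..<n} False (\<lambda>_. UNIV)"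
    by (auto simp: PiE_dflt_def)
  then show "finite {f::nat\<Rightarrow>bool. \<forall>x. x \<notin> {..<n} \<longrightarrow> f x = False}"
    by (simp add: finite_PiE_dflt)
qed simp

lemma fin_bern: "finite (set_pmf (bernoulli_pmf q))"
  by (rule finite_subset[of _ UNIV]) auto


lemma prodE:
  assumes D: "D \<subseteq> {..<(n::nat)}" and p: "\<And>x. x<n \<Longrightarrow> 0 \<le> p x \<and> p x \<le> 1"
    and h: "\<And>x b. 0 \<le> h x b"
  shows "measure_pmf.expectation (Pi_pmf {..<n} False (\<lambda>j. bernoulli_pmf (p j))) (\<lambda>f. \<Prod>x\<in>D. h x (f x))
     = (\<Prod>x\<in>D. h x True * p x + h x False * (1 - p x))"
proof -
  define h' where "h' x = (if x \<in> D then h x else (\<lambda>_. 1::real))" for x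
  have 1: "(\<Prod>x\<in>D. g x) = (\<Prod>x<n. if x \<in> D then g x else 1)" for g :: "nat \<Rightarrow> real"
    using D by (intro prod.mono_neutral_cong_left) auto
  have h'nn: "0 \<le> h' x b" for x b unfolding h'_def using h by simp
  have "measure_pmf.expectation (Pi_pmf {..<n} False (\<lambda>j. bernoulli_pmf (p j))) (\<lambda>f. \<Prod>x<n. h' x (f x))
     = (\<Prod>x<n. measure_pmf.expectation (bernoulli_pmf (p x)) (h' x))"
    by (rule expectation_prod_Pi_pmf[OF finite_lessThan integrable_measure_pmf_finite[OF fin_bern] h'nn])
  also have "\<dots> = (\<Prod>x<n. h' x True * p x + h' x False * (1 - p x))"
  proof (rule prod.cong[OF refl])
    fix x assume "x \<in> {..<n}"
    then have "0 \<le> p x" "p x \<le> 1" using p by auto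
    then show "measure_pmf.expectation (bernoulli_pmf (p x)) (h' x) = h' x True * p x + h' x False * (1 - p x)"
      by (rule integral_bernoulli_pmf)
  qed
  finally have *: "measure_pmf.expectation (Pi_pmf {..<n} False (\<lambda>j. bernoulli_pmf (p j))) (\<lambda>f. \<Prod>x<n. h' x (f x))
     = (\<Prod>x<n. h' x True * p x + h' x False * (1 - p x))" .
  have e1: "(\<lambda>f. \<Prod>x\<in>D. h x (f x)) = (\<lambda>f. \<Prod>x<n. h' x (f x))"
  proof
    fix f :: "nat \<Rightarrow> bool"
    show "(\<Prod>x\<in>D. h x (f x)) = (\<Prod>x<n. h' x (f x))"
      unfolding 1[of "\<lambda>x. h x (f x)"] by (intro prod.cong) (auto simp: h'_def)
  qed
  have e2: "(\<Prod>x\<in>D. h x True * p x + h x False * (1 - p x)) = (\<Prod>x<n. h' x True * p x + h' x False * (1 - p x))"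
    unfolding 1[of "\<lambda>x. h x True * p x + h x False * (1 - p x)"] by (intro prod.cong) (auto simp: h'_def)
  show ?thesis unfolding e1 e2 by (rule *)
qed

definition hh :: "nat \<Rightarrow> (nat\<Rightarrow>nat\<Rightarrow>real) \<Rightarrow> nat \<Rightarrow> nat \<Rightarrow> nat \<Rightarrow> bool \<Rightarrow> real" where
  "hh k A i j y b = (if y = j then of_bool b else exp (ell k / 2 * (if b then A i y else 0)))"

definition Gfun :: "nat \<Rightarrow> (nat\<Rightarrow>nat\<Rightarrow>real) \<Rightarrow> nat \<Rightarrow> nat \<Rightarrow> nat \<Rightarrow> (nat \<Rightarrow> bool) \<Rightarrow> real" where
  "Gfun k A n i j f =
     (\<Sum>a\<in>med k A n i - {j}. \<Sum>b\<in>med k A n i - {j} - {a}. \<Prod>y\<in>{j,a,b}. of_bool (f y))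
     + exp (- ell k / 6) * (\<Prod>y\<in>insert j (tiny k A n i - {j}). hh k A i j y (f y))"

lemma fin_med: "finite (med k A n i)" unfolding med_def by auto
lemma fin_tiny: "finite (tiny k A n i)" unfolding tiny_def by auto

lemma pair_nn: "0 \<le> (\<Sum>a\<in>M. \<Sum>b\<in>M - {a}. \<Prod>y\<in>{j,a,b}. of_bool (f y) :: real)"
  by (intro sum_nonneg prod_nonneg) auto

lemma exp_nn: "0 \<le> exp (- ell k / 6) * (\<Prod>y\<in>insert j T. hh k A i j y (f y))"
  by (intro mult_nonneg_nonneg prod_nonneg) (auto simp: hh_def)

lemma pair_ge1:
  assumes "finite M" "a \<in> M" "b \<in> M" "a \<noteq> b" "f j" "f a" "f b"
  shows "1 \<le> (\<Sum>a\<in>M. \<Sum>b\<in>M - {a}. \<Prod>y\<in>{j,a,b}. of_bool (f y) :: real)"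
proof -
  have "1 = (\<Prod>y\<in>{j,a,b}. of_bool (f y) :: real)"
    using assms by (intro prod.neutral[symmetric]) auto
  also have "\<dots> \<le> (\<Sum>b\<in>M - {a}. \<Prod>y\<in>{j,a,b}. of_bool (f y) :: real)"
    using assms by (intro member_le_sum prod_nonneg) auto
  also have "\<dots> \<le> (\<Sum>a\<in>M. \<Sum>b\<in>M - {a}. \<Prod>y\<in>{j,a,b}. of_bool (f y) :: real)"
    using assms by (intro member_le_sum[where f="\<lambda>a. \<Sum>b\<in>M - {a}. \<Prod>y\<in>{j,a,b}. of_bool (f y) :: real"] sum_nonneg prod_nonneg) auto
  finally show ?thesis .
qed

lemma exp_ge1:
  assumes "finite T" "j \<notin> T" "f j" "0 \<le> ell k" "1/3 \<le> (\<Sum>t\<in>T \<inter> {y. f y}. A i t)"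
  shows "1 \<le> exp (- ell k / 6) * (\<Prod>y\<in>insert j T. hh k A i j y (f y))"
proof -
  have "(\<Prod>y\<in>insert j T. hh k A i j y (f y)) = hh k A i j j (f j) * (\<Prod>y\<in>T. hh k A i j y (f y))"
    by (rule prod.insert) (use assms in auto)
  also have "hh k A i j j (f j) = 1" using assms by (simp add: hh_def)
  also have "(\<Prod>y\<in>T. hh k A i j y (f y)) = (\<Prod>y\<in>T. exp (ell k / 2 * (if f y then A i y else 0)))"
    by (rule prod.cong[OF refl]) (use assms in \<open>auto simp: hh_def\<close>)
  also have "\<dots> = exp (\<Sum>y\<in>T. ell k / 2 * (if f y then A i y else 0))"
    by (rule exp_sum[symmetric]) (rule assms)
  also have "(\<Sum>y\<in>T. ell k / 2 * (if f y then A i y else 0)) = ell k / 2 * (\<Sum>y\<in>T. (if f y then A i y else 0))"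
    by (rule sum_distrib_left[symmetric])
  also have "(\<Sum>y\<in>T. (if f y then A i y else 0)) = (\<Sum>t\<in>T \<inter> {y. f y}. A i t)"
    using sum.inter_restrict[OF assms(1), of "A i" "{y. f y}"] by simp
  finally have e: "(\<Prod>y\<in>insert j T. hh k A i j y (f y)) = exp (ell k / 2 * (\<Sum>t\<in>T \<inter> {y. f y}. A i t))"
    by simp
  have "exp (- ell k / 6) * (\<Prod>y\<in>insert j T. hh k A i j y (f y)) = exp (- ell k / 6 + ell k / 2 * (\<Sum>t\<in>T \<inter> {y. f y}. A i t))"
    unfolding e by (rule exp_add[symmetric])
  moreover have "ell k / 2 * (1/3) \<le> ell k / 2 * (\<Sum>t\<in>T \<inter> {y. f y}. A i t)"
    by (rule mult_left_mono) (use assms in auto)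
  then have "0 \<le> - ell k / 6 + ell k / 2 * (\<Sum>t\<in>T \<inter> {y. f y}. A i t)"
    by linarith
  ultimately show ?thesis by simp
qed


lemma two_elems:
  assumes "2 \<le> card S" shows "\<exists>a\<in>S. \<exists>b\<in>S. a \<noteq> b"
proof (rule ccontr)
  assume "\<not> (\<exists>a\<in>S. \<exists>b\<in>S. a \<noteq> b)"
  then have "\<forall>a\<in>S. \<forall>b\<in>S. a = b" by auto
  moreover have "finite S" using assms by (metis card.infinite not_numeral_le_zero)
  ultimately have "card S \<le> Suc 0" using card_le_Suc0_iff_eq by blast
  then show False using assms by simp
qed

lemma med_tiny_disj: "med k A n i \<inter> tiny k A n i = {}"
  unfolding med_def tiny_def by auto

lemma det:
  assumes ell6: "6 \<le> ell k" and fj: "f j"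
    and ev: "(j \<in> med k A n i \<and> 3 \<le> card (med k A n i \<inter> {y. f y})) \<or>
             (j \<in> tiny k A n i \<and> ((\<Sum>j'\<in>((med k A n i \<union> tiny k A n i) \<inter> {y. f y}) - {j}. A i j') > 1 - A i j
                \<or> 2 \<le> card (med k A n i \<inter> {y. f y})))"
  shows "1 \<le> Gfun k A n i j f"
proof -
  define M where "M = med k A n i"
  define Tf where "Tf = tiny k A n i"
  define R where "R = {y. f y}"
  have fM: "finite M" and fT: "finite Tf" unfolding M_def Tf_def by (rule fin_med, rule fin_tiny)
  have G: "Gfun k A n i j f = (\<Sum>a\<in>M - {j}. \<Sum>b\<in>M - {j} - {a}. \<Prod>y\<in>{j,a,b}. of_bool (f y))
     + exp (- ell k / 6) * (\<Prod>y\<in>insert j (Tf - {j}). hh k A i j y (f y))"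
    unfolding Gfun_def M_def Tf_def ..
  have nn1: "0 \<le> (\<Sum>a\<in>M - {j}. \<Sum>b\<in>M - {j} - {a}. \<Prod>y\<in>{j,a,b}. of_bool (f y) :: real)"
    by (rule pair_nn)
  have nn2: "0 \<le> exp (- ell k / 6) * (\<Prod>y\<in>insert j (Tf - {j}). hh k A i j y (f y))"
    by (rule exp_nn)
  have pairs: "1 \<le> Gfun k A n i j f" if c2: "2 \<le> card ((M - {j}) \<inter> R)"
  proof -
    obtain a b where ab: "a \<in> (M - {j}) \<inter> R" "b \<in> (M - {j}) \<inter> R" "a \<noteq> b"
      using two_elems[OF c2] by blast
    have "1 \<le> (\<Sum>a\<in>M - {j}. \<Sum>b\<in>M - {j} - {a}. \<Prod>y\<in>{j,a,b}. of_bool (f y) :: real)"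
      by (rule pair_ge1[of _ a b]) (use ab fM fj R_def in auto)
    then show ?thesis unfolding G using nn2 by linarith
  qed
  show ?thesis
  proof (cases "j \<in> M \<and> 3 \<le> card (M \<inter> R)")
    case True
    have "(M - {j}) \<inter> R = (M \<inter> R) - {j}" by auto
    moreover have "j \<in> M \<inter> R" using True fj R_def by auto
    ultimately have "card ((M - {j}) \<inter> R) = card (M \<inter> R) - 1" by simp
    then have "2 \<le> card ((M - {j}) \<inter> R)" using True by linarith
    then show ?thesis by (rule pairs)
  next
    case False
    then have jT: "j \<in> Tf" and alt: "(\<Sum>j'\<in>((M \<union> Tf) \<inter> R) - {j}. A i j') > 1 - A i j \<or> 2 \<le> card (M \<inter> R)"
      using ev unfolding M_def Tf_def R_def by auto
    have jM: "j \<notin> M" using jT med_tiny_disj unfolding M_def Tf_def by blast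
    then have MM: "M - {j} = M" by simp
    show ?thesis
    proof (cases "2 \<le> card (M \<inter> R)")
      case True
      then show ?thesis using pairs MM by simp
    next
      case False
      then have c1: "card (M \<inter> R) \<le> 1" by simp
      have sgt: "(\<Sum>j'\<in>((M \<union> Tf) \<inter> R) - {j}. A i j') > 1 - A i j" using alt False by auto
      have split: "((M \<union> Tf) \<inter> R) - {j} = (M \<inter> R) \<union> ((Tf - {j}) \<inter> R)" using jM by auto
      have disj: "(M \<inter> R) \<inter> ((Tf - {j}) \<inter> R) = {}" using med_tiny_disj[of k A n i] unfolding M_def Tf_def by blast
      have "(\<Sum>j'\<in>((M \<union> Tf) \<inter> R) - {j}. A i j') = (\<Sum>j'\<in>M \<inter> R. A i j') + (\<Sum>j'\<in>(Tf - {j}) \<inter> R. A i j')"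
        unfolding split by (rule sum.union_disjoint) (use fM fT disj in auto)
      moreover have "(\<Sum>j'\<in>M \<inter> R. A i j') \<le> of_nat (card (M \<inter> R)) * (1/2)"
        by (rule sum_bounded_above) (auto simp: M_def med_def)
      moreover have "of_nat (card (M \<inter> R)) * (1/2::real) \<le> 1/2" using c1 by simp
      moreover have "A i j < 1 / ell k" using jT unfolding Tf_def tiny_def by auto
      moreover have "1 / ell k \<le> 1/6" using ell6 by (simp add: divide_simps)
      ultimately have "1/3 \<le> (\<Sum>j'\<in>(Tf - {j}) \<inter> R. A i j')" using sgt by linarith
      then have "1 \<le> exp (- ell k / 6) * (\<Prod>y\<in>insert j (Tf - {j}). hh k A i j y (f y))"
        by (intro exp_ge1) (use fT fj ell6 R_def in auto)
      then show ?thesis unfolding G using nn1 by linarith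
    qed
  qed
qed


definition PB :: "nat \<Rightarrow> (nat \<Rightarrow> real) \<Rightarrow> (nat \<Rightarrow> bool) pmf" where
  "PB n p = Pi_pmf {..<n} False (\<lambda>j. bernoulli_pmf (p j))"

lemma intg: "integrable (measure_pmf (PB n p)) (g :: _ \<Rightarrow> real)"
  unfolding PB_def by (rule integrable_measure_pmf_finite[OF fin_Pi])

lemma probD:
  assumes "D \<subseteq> {..<n}" "\<And>x. x<n \<Longrightarrow> 0 \<le> p x \<and> p x \<le> 1"
  shows "measure_pmf.expectation (PB n p) (\<lambda>f. \<Prod>y\<in>D. of_bool (f y)) = (\<Prod>y\<in>D. p y)"
  unfolding PB_def using prodE[OF assms, where h="\<lambda>y b. of_bool b"] by simp

lemma EG:
  assumes inst: "kcspip_instance k m n A x" and i: "i < m" and j: "j < n"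
    and p: "\<And>y. p y = q * x y" and q0: "0 \<le> q" and q1: "q \<le> 1"
    and ell6: "6 \<le> ell k" and ellq: "ell k * q \<le> 1" and expq: "exp (- ell k / 6) \<le> q^2"
  shows "measure_pmf.expectation (PB n p) (Gfun k A n i j) \<le> p j * q^2 * (ell k ^ 2 + 3)"
proof -
  have Ai: "\<And>y. y < n \<Longrightarrow> 0 \<le> A i y \<and> A i y \<le> 1" and xr: "\<And>y. y < n \<Longrightarrow> 0 \<le> x y \<and> x y \<le> 1"
    and rowsum: "(\<Sum>y<n. A i y * x y) \<le> 1"
    using inst i unfolding kcspip_instance_def by auto
  have pr: "\<And>y. y < n \<Longrightarrow> 0 \<le> p y \<and> p y \<le> 1"
    using xr q0 q1 p by (simp add: mult_le_one)
  have subsum: "(\<Sum>y\<in>S. A i y * x y) \<le> 1" if "S \<subseteq> {..<n}" for S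
  proof -
    have "(\<Sum>y\<in>S. A i y * x y) \<le> (\<Sum>y<n. A i y * x y)"
      by (rule sum_mono2) (use that Ai xr in auto)
    then show ?thesis using rowsum by linarith
  qed
  define M where "M = med k A n i - {j}"
  define T where "T = tiny k A n i - {j}"
  have Mn: "M \<subseteq> {..<n}" and Tn: "T \<subseteq> {..<n}" unfolding M_def T_def med_def tiny_def by auto
  have fM: "finite M" and fT: "finite T" using Mn Tn finite_subset by blast+
  have jM: "j \<notin> M" and jT: "j \<notin> T" unfolding M_def T_def by auto
  have ellpos: "0 < ell k" using ell6 by simp
  have Epairs: "measure_pmf.expectation (PB n p) (\<lambda>f. \<Sum>a\<in>M. \<Sum>b\<in>M - {a}. \<Prod>y\<in>{j,a,b}. of_bool (f y) :: real)
      = (\<Sum>a\<in>M. \<Sum>b\<in>M - {a}. p j * p a * p b)"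
  proof -
    have "measure_pmf.expectation (PB n p) (\<lambda>f. \<Sum>a\<in>M. \<Sum>b\<in>M - {a}. \<Prod>y\<in>{j,a,b}. of_bool (f y) :: real)
       = (\<Sum>a\<in>M. \<Sum>b\<in>M - {a}. measure_pmf.expectation (PB n p) (\<lambda>f. \<Prod>y\<in>{j,a,b}. of_bool (f y) :: real))"
    proof -
      have s1: "measure_pmf.expectation (PB n p) (\<lambda>f. \<Sum>a\<in>M. \<Sum>b\<in>M - {a}. \<Prod>y\<in>{j,a,b}. of_bool (f y) :: real)
        = (\<Sum>a\<in>M. measure_pmf.expectation (PB n p) (\<lambda>f. \<Sum>b\<in>M - {a}. \<Prod>y\<in>{j,a,b}. of_bool (f y) :: real))"
        by (simp add: Bochner_Integration.integral_sum intg)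
      have s2: "measure_pmf.expectation (PB n p) (\<lambda>f. \<Sum>b\<in>M - {a}. \<Prod>y\<in>{j,a,b}. of_bool (f y) :: real)
        = (\<Sum>b\<in>M - {a}. measure_pmf.expectation (PB n p) (\<lambda>f. \<Prod>y\<in>{j,a,b}. of_bool (f y) :: real))" for a
        by (simp add: Bochner_Integration.integral_sum intg)
      show ?thesis unfolding s1 s2 ..
    qed
    also have "\<dots> = (\<Sum>a\<in>M. \<Sum>b\<in>M - {a}. p j * p a * p b)"
    proof (intro sum.cong refl)
      fix a b assume a: "a \<in> M" and b: "b \<in> M - {a}"
      have ne: "j \<noteq> a" "j \<noteq> b" "a \<noteq> b" using a b jM by auto
      have "{j,a,b} \<subseteq> {..<n}" using a b Mn j by auto
      then have "measure_pmf.expectation (PB n p) (\<lambda>f. \<Prod>y\<in>{j,a,b}. of_bool (f y) :: real) = (\<Prod>y\<in>{j,a,b}. p y)"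
        by (rule probD) (rule pr)
      also have "\<dots> = p j * p a * p b" using ne by (simp add: mult.assoc)
      finally show "measure_pmf.expectation (PB n p) (\<lambda>f. \<Prod>y\<in>{j,a,b}. of_bool (f y) :: real) = p j * p a * p b" .
    qed
    finally show ?thesis .
  qed
  have sumM: "(\<Sum>a\<in>M. p a) \<le> q * ell k"
  proof -
    have "(\<Sum>a\<in>M. p a) \<le> (\<Sum>a\<in>M. q * ell k * (A i a * x a))"
    proof (rule sum_mono)
      fix a assume a: "a \<in> M"
      then have "1 / ell k \<le> A i a" "a < n" unfolding M_def med_def by auto
      then have "1 \<le> ell k * A i a" using ellpos by (simp add: divide_simps mult.commute)
      then have "x a * 1 \<le> x a * (ell k * A i a)" using xr \<open>a < n\<close> by (intro mult_left_mono) auto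
      then have "q * x a \<le> q * (x a * (ell k * A i a))" using q0 by (intro mult_left_mono) auto
      then show "p a \<le> q * ell k * (A i a * x a)" by (simp add: p algebra_simps)
    qed
    also have "\<dots> = q * ell k * (\<Sum>a\<in>M. A i a * x a)" by (simp add: sum_distrib_left)
    also have "\<dots> \<le> q * ell k * 1" using subsum[OF Mn] q0 ellpos by (intro mult_left_mono) auto
    finally show ?thesis by simp
  qed
  have pairsb: "(\<Sum>a\<in>M. \<Sum>b\<in>M - {a}. p j * p a * p b) \<le> p j * q^2 * ell k ^ 2"
  proof -
    have "(\<Sum>a\<in>M. \<Sum>b\<in>M - {a}. p j * p a * p b) \<le> (\<Sum>a\<in>M. \<Sum>b\<in>M. p j * p a * p b)"
      by (intro sum_mono sum_mono2) (use fM Mn pr j in \<open>auto intro!: mult_nonneg_nonneg\<close>)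
    also have "\<dots> = p j * ((\<Sum>a\<in>M. p a) * (\<Sum>a\<in>M. p a))"
      by (simp add: sum_distrib_left sum_distrib_right algebra_simps)
    also have "\<dots> \<le> p j * ((q * ell k) * (q * ell k))"
      using sumM pr j Mn q0 ellpos by (intro mult_left_mono mult_mono sum_nonneg) auto
    finally show ?thesis by (simp add: power2_eq_square algebra_simps)
  qed
  have Eprod: "measure_pmf.expectation (PB n p) (\<lambda>f. \<Prod>y\<in>insert j T. hh k A i j y (f y))
     = p j * (\<Prod>t\<in>T. exp (ell k / 2 * A i t) * p t + (1 - p t))"
  proof -
    have "measure_pmf.expectation (PB n p) (\<lambda>f. \<Prod>y\<in>insert j T. hh k A i j y (f y))
       = (\<Prod>y\<in>insert j T. hh k A i j y True * p y + hh k A i j y False * (1 - p y))"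
      unfolding PB_def by (rule prodE) (use Tn j pr in \<open>auto simp: hh_def\<close>)
    also have "\<dots> = (hh k A i j j True * p j + hh k A i j j False * (1 - p j)) *
        (\<Prod>y\<in>T. hh k A i j y True * p y + hh k A i j y False * (1 - p y))"
      by (rule prod.insert) (use fT jT in auto)
    also have "(\<Prod>y\<in>T. hh k A i j y True * p y + hh k A i j y False * (1 - p y))
       = (\<Prod>t\<in>T. exp (ell k / 2 * A i t) * p t + (1 - p t))"
      by (rule prod.cong[OF refl]) (use jT in \<open>auto simp: hh_def\<close>)
    finally show ?thesis by (simp add: hh_def)
  qed
  have prodb: "(\<Prod>t\<in>T. exp (ell k / 2 * A i t) * p t + (1 - p t)) \<le> 3"
  proof -
    have "(\<Prod>t\<in>T. exp (ell k / 2 * A i t) * p t + (1 - p t)) \<le> (\<Prod>t\<in>T. exp (ell k * q * (A i t * x t)))"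
    proof (rule prod_mono)
      fix t assume t: "t \<in> T"
      then have tn: "t < n" and a1: "A i t < 1 / ell k" and a0: "0 < A i t" unfolding T_def tiny_def by auto
      have z: "norm (ell k / 2 * A i t) \<le> 1/2" using a1 a0 ellpos by (simp add: field_simps abs_of_pos)
      have e: "exp (ell k / 2 * A i t) \<le> 1 + 2 * (ell k / 2 * A i t)"
        using exp_bound_lemma[OF z] a0 ellpos by simp
      have pt: "0 \<le> p t" "p t \<le> 1" using pr tn by auto
      have "exp (ell k / 2 * A i t) * p t + (1 - p t) \<le> (1 + ell k * A i t) * p t + (1 - p t)"
        using e pt by (intro add_right_mono mult_right_mono) auto
      also have "\<dots> = 1 + ell k * q * (A i t * x t)" by (simp add: p algebra_simps)
      also have "\<dots> \<le> exp (ell k * q * (A i t * x t))" by (rule exp_ge_add_one_self)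
      finally show "0 \<le> exp (ell k / 2 * A i t) * p t + (1 - p t) \<and>
          exp (ell k / 2 * A i t) * p t + (1 - p t) \<le> exp (ell k * q * (A i t * x t))"
        using pt by (auto intro!: add_nonneg_nonneg)
    qed
    also have "\<dots> = exp (ell k * q * (\<Sum>t\<in>T. A i t * x t))"
      by (simp add: exp_sum[OF fT, symmetric] sum_distrib_left)
    also have "\<dots> \<le> exp (1)"
    proof -
      have "ell k * q * (\<Sum>t\<in>T. A i t * x t) \<le> ell k * q * 1"
        using subsum[OF Tn] ellpos q0 by (intro mult_left_mono) auto
      then show ?thesis using ellq by simp
    qed
    also have "\<dots> \<le> 3" using exp_le by simp
    finally show ?thesis .
  qed
  have pj: "0 \<le> p j" using pr j by auto
  have pT: "\<And>t. t \<in> T \<Longrightarrow> 0 \<le> p t \<and> p t \<le> 1" using pr Tn by auto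
  have expb: "exp (- ell k / 6) * measure_pmf.expectation (PB n p) (\<lambda>f. \<Prod>y\<in>insert j T. hh k A i j y (f y))
       \<le> q^2 * (p j * 3)"
    unfolding Eprod
    by (intro mult_mono expq mult_left_mono prodb pj) (auto intro!: mult_nonneg_nonneg prod_nonneg add_nonneg_nonneg
        simp: pj dest!: pT)
  have "measure_pmf.expectation (PB n p) (Gfun k A n i j)
      = measure_pmf.expectation (PB n p) (\<lambda>f. \<Sum>a\<in>M. \<Sum>b\<in>M - {a}. \<Prod>y\<in>{j,a,b}. of_bool (f y) :: real)
        + exp (- ell k / 6) * measure_pmf.expectation (PB n p) (\<lambda>f. \<Prod>y\<in>insert j T. hh k A i j y (f y))"
    unfolding Gfun_def M_def[symmetric] T_def[symmetric] by (simp add: intg)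
  also have "\<dots> \<le> p j * q^2 * ell k ^ 2 + q^2 * (p j * 3)"
    using Epairs pairsb expb by linarith
  finally show ?thesis by (simp add: algebra_simps)
qed


lemma Gfun_nn: "0 \<le> Gfun k A n i j f"
  unfolding Gfun_def by (intro add_nonneg_nonneg pair_nn exp_nn)

lemma main_bound:
  assumes inst: "kcspip_instance k m n A x" and j: "j < n"
    and qdef: "q = alpha k / real k" and q0: "0 \<le> q" and q1: "q \<le> 1"
    and L1: "1 \<le> ln (real k / alpha k)"
    and ellq: "ell k * q \<le> 1" and expq: "exp (- ell k / 6) \<le> q^2"
  shows "cond_prob (R0_pmf k n x)
              (\<lambda>R. medium_block k m n A R j \<or> tiny_block k m n A R j) (\<lambda>R. j \<in> R)
            \<le> 6403 * (alpha k ^ 2 / real k * (ln (real k / alpha k)) ^ 2)"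
proof -
  define L where "L = ln (real k / alpha k)"
  define p where "p y = alpha k * x y / real k" for y
  have p: "\<And>y. p y = q * x y" unfolding p_def qdef by simp
  have ellL: "ell k = 80 * L" unfolding ell_def L_def ..
  have ell6: "6 \<le> ell k" using L1 unfolding ellL L_def by simp
  have xr: "\<And>y. y < n \<Longrightarrow> 0 \<le> x y \<and> x y \<le> 1" using inst unfolding kcspip_instance_def by auto
  have pr: "\<And>y. y < n \<Longrightarrow> 0 \<le> p y \<and> p y \<le> 1"
    using xr q0 q1 p by (simp add: mult_le_one)
  define E where "E R \<longleftrightarrow> medium_block k m n A R j \<or> tiny_block k m n A R j" for R
  define S where "S = {f. E {y. f y} \<and> f j}"
  define I where "I = {i. i < m \<and> A i j \<noteq> 0}"
  have cardI: "card I \<le> k" using inst j unfolding kcspip_instance_def I_def by auto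
  have fI: "finite I" unfolding I_def by auto
  have R0: "R0_pmf k n x = map_pmf (\<lambda>f. {y. f y}) (PB n p)"
    unfolding R0_pmf_def PB_def p_def ..
  have num: "measure_pmf.prob (R0_pmf k n x) {R. E R \<and> j \<in> R} = measure_pmf.prob (PB n p) S"
    unfolding R0 S_def by (simp add: vimage_def)
  have den: "measure_pmf.prob (R0_pmf k n x) {R. j \<in> R} = p j"
  proof -
    have "measure_pmf.prob (R0_pmf k n x) {R. j \<in> R} = measure_pmf.prob (PB n p) {f. f j}"
      unfolding R0 by (simp add: vimage_def)
    also have "\<dots> = measure_pmf.expectation (PB n p) (indicator {f. f j})" by simp
    also have "indicator {f. f j} = (\<lambda>f. \<Prod>y\<in>{j}. of_bool (f y) :: real)"
      by (auto simp: indicator_def)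
    also have "measure_pmf.expectation (PB n p) \<dots> = (\<Prod>y\<in>{j}. p y)"
      by (rule probD) (use j pr in auto)
    finally show ?thesis by simp
  qed
  have numb: "measure_pmf.prob (PB n p) S \<le> (\<Sum>i\<in>I. measure_pmf.expectation (PB n p) (Gfun k A n i j))"
  proof -
    have "measure_pmf.prob (PB n p) S = measure_pmf.expectation (PB n p) (indicator S)" by simp
    also have "\<dots> \<le> measure_pmf.expectation (PB n p) (\<lambda>f. \<Sum>i\<in>I. Gfun k A n i j f)"
    proof (rule integral_mono[OF intg intg])
      fix f assume _: "f \<in> space (measure_pmf (PB n p))"
      show "indicator S f \<le> (\<Sum>i\<in>I. Gfun k A n i j f)"
      proof (cases "f \<in> S")
        case False
        then show ?thesis by (simp add: sum_nonneg Gfun_nn)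
      next
        case True
        then have fj: "f j" and e: "E {y. f y}" unfolding S_def by auto
        then obtain i where i: "i < m" and ev: "(j \<in> med k A n i \<and> 3 \<le> card (med k A n i \<inter> {y. f y})) \<or>
             (j \<in> tiny k A n i \<and> ((\<Sum>j'\<in>((med k A n i \<union> tiny k A n i) \<inter> {y. f y}) - {j}. A i j') > 1 - A i j
                \<or> 2 \<le> card (med k A n i \<inter> {y. f y})))"
          unfolding E_def medium_block_def tiny_block_def by blast
        have "0 < 1 / ell k" using ell6 by simp
        then have "A i j \<noteq> 0" using ev unfolding med_def tiny_def by auto
        then have iI: "i \<in> I" using i unfolding I_def by auto
        have "1 \<le> Gfun k A n i j f" by (rule det[OF ell6 fj ev])
        also have "\<dots> \<le> (\<Sum>i\<in>I. Gfun k A n i j f)"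
          by (rule member_le_sum[OF iI]) (auto simp: Gfun_nn fI)
        finally show ?thesis using True by simp
      qed
    qed
    also have "\<dots> = (\<Sum>i\<in>I. measure_pmf.expectation (PB n p) (Gfun k A n i j))"
      by (simp add: Bochner_Integration.integral_sum intg)
    finally show ?thesis .
  qed
  also have "\<dots> \<le> (\<Sum>i\<in>I. p j * q^2 * (ell k ^ 2 + 3))"
  proof (rule sum_mono)
    fix i assume "i \<in> I"
    then have "i < m" unfolding I_def by auto
    then show "measure_pmf.expectation (PB n p) (Gfun k A n i j) \<le> p j * q^2 * (ell k ^ 2 + 3)"
      by (rule EG[OF inst _ j p q0 q1 ell6 ellq expq])
  qed
  also have "\<dots> = real (card I) * (p j * q^2 * (ell k ^ 2 + 3))" by simp
  also have "\<dots> \<le> real k * (p j * q^2 * (ell k ^ 2 + 3))"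
    using cardI pr j by (intro mult_right_mono) auto
  also have "\<dots> \<le> real k * (p j * q^2 * (6403 * L^2))"
  proof -
    have "1 \<le> L^2" using L1 unfolding L_def by simp
    then have "ell k ^ 2 + 3 \<le> 6403 * L^2" unfolding ellL by (simp add: power_mult_distrib)
    then show ?thesis using pr j by (intro mult_left_mono) auto
  qed
  also have "\<dots> = 6403 * (alpha k ^ 2 / real k * L ^ 2) * p j"
  proof (cases "k = 0")
    case True then show ?thesis by simp
  next
    case False then show ?thesis unfolding qdef by (simp add: power2_eq_square field_simps)
  qed
  finally have nb: "measure_pmf.prob (PB n p) S \<le> 6403 * (alpha k ^ 2 / real k * L ^ 2) * p j" .
  have Cnn: "0 \<le> 6403 * (alpha k ^ 2 / real k * L ^ 2)" by simp
  have "cond_prob (R0_pmf k n x) E (\<lambda>R. j \<in> R) = measure_pmf.prob (PB n p) S / p j"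
    unfolding cond_prob_def num[symmetric] den[symmetric] by simp
  also have "\<dots> \<le> 6403 * (alpha k ^ 2 / real k * L ^ 2)"
  proof (cases "p j = 0")
    case True then show ?thesis using Cnn by simp
  next
    case False
    then have "0 < p j" using pr j by force
    then show ?thesis using nb by (simp add: divide_simps)
  qed
  finally show ?thesis unfolding E_def L_def by simp
qed


theorem lemma3:
  shows "(\<exists>C K0. \<forall>k\<ge>K0. \<forall>m n A x j. kcspip_instance k m n A x \<longrightarrow> j < n \<longrightarrow>
            cond_prob (R0_pmf k n x)
              (\<lambda>R. medium_block k m n A R j \<or> tiny_block k m n A R j) (\<lambda>R. j \<in> R)
            \<le> C * (alpha k ^ 2 / real k * (ln (real k / alpha k)) ^ 2))
      \<and> ((\<lambda>k. alpha k ^ 2 / real k * (ln (real k / alpha k)) ^ 2) \<longlonglongrightarrow> 0)"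
proof
  have "eventually (\<lambda>k. 1 \<le> ln (real k / alpha k) \<and> alpha k \<le> real k \<and> 1 \<le> real k \<and>
      80 * ln (real k / alpha k) * (alpha k / real k) \<le> 1) sequentially"
    unfolding alpha_def by (intro eventually_conj; real_asymp)
  then obtain K0 where K0: "\<And>k. K0 \<le> k \<Longrightarrow> 1 \<le> ln (real k / alpha k) \<and> alpha k \<le> real k \<and> 1 \<le> real k \<and>
      80 * ln (real k / alpha k) * (alpha k / real k) \<le> 1"
    by (auto simp: eventually_sequentially)
  show "\<exists>C K0. \<forall>k\<ge>K0. \<forall>m n A x j. kcspip_instance k m n A x \<longrightarrow> j < n \<longrightarrow>
            cond_prob (R0_pmf k n x)
              (\<lambda>R. medium_block k m n A R j \<or> tiny_block k m n A R j) (\<lambda>R. j \<in> R)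
            \<le> C * (alpha k ^ 2 / real k * (ln (real k / alpha k)) ^ 2)"
  proof (rule exI[of _ 6403], rule exI[of _ K0], intro allI impI)
    fix k m n A x j
    assume k: "K0 \<le> k" and inst: "kcspip_instance k m n A x" and j: "j < n"
    define L where "L = ln (real k / alpha k)"
    define q where "q = alpha k / real k"
    have L1: "1 \<le> L" and ak: "alpha k \<le> real k" and k1: "1 \<le> real k" and lq: "80 * L * q \<le> 1"
      using K0[OF k] unfolding L_def q_def by auto
    have apos: "0 < alpha k" using k1 unfolding alpha_def by simp
    have q0: "0 \<le> q" unfolding q_def using apos k1 by simp
    have q1: "q \<le> 1" unfolding q_def using ak k1 by simp
    have ellq: "ell k * q \<le> 1" unfolding ell_def L_def[symmetric] using lq by simp
    have "exp L = real k / alpha k" unfolding L_def using apos k1 by simp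
    then have qe: "q = exp (- L)" unfolding q_def using apos k1 by (simp add: exp_minus)
    have "exp (- ell k / 6) \<le> exp (- L + - L)"
      unfolding ell_def L_def[symmetric] using L1 by simp
    also have "\<dots> = q^2" unfolding qe power2_eq_square by (rule exp_add)
    finally have expq: "exp (- ell k / 6) \<le> q^2" .
    have L1': "1 \<le> ln (real k / alpha k)" using L1 unfolding L_def .
    show "cond_prob (R0_pmf k n x)
              (\<lambda>R. medium_block k m n A R j \<or> tiny_block k m n A R j) (\<lambda>R. j \<in> R)
            \<le> 6403 * (alpha k ^ 2 / real k * (ln (real k / alpha k)) ^ 2)"
      by (rule main_bound[OF inst j q_def q0 q1 L1' ellq expq])
  qed
  show "(\<lambda>k. alpha k ^ 2 / real k * (ln (real k / alpha k)) ^ 2) \<longlonglongrightarrow> 0"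
    unfolding alpha_def by real_asymp
qed

end
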